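(* Let $f:\mathbb{R}\to\mathbb{R}$ be a real quasi-periodic function, $\mathcal{Q}_0(t)=\exp\left(2i\int_0^tf(\tau)d\tau\right)$ and $\mathcal{Q}_1(t)=\mathcal{Q}_0(t)\int_0^t(\mathcal{Q}_0(\tau)^{-1}-M(\mathcal{Q}_0^{-1}))d\tau$. Assume $M(\mathcal{Q}_0)=M(\mathcal{Q}_1)=0$. Then $$M\left(\mathcal{Q}_1(t)\int_0^t\overline{\mathcal{Q}_0(\tau)}\,d\tau\right)=2\,\overline{M\left(\mathcal{Q}_0(t)\int_0^t\mathcal{Q}_1(\tau)\,d\tau\right)}.$$
   Context: For quasi-periodic $f$, $\mathcal{Q}_0$ and $\mathcal{Q}_1$ are quasi-periodic; $M(h)=\lim_{T\to\infty}\frac1{2T}\int_{-T}^Th(t)dt$ denotes the mean value of a quasi-periodic function $h$. *)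

theory Defs
  imports "HOL-Analysis.Analysis"
begin

text \<open>Vectors of R^n are encoded as nat \<Rightarrow> real,
  with F depending only on the first n coordinates.\<close>
definition quasi_periodic :: "(real \<Rightarrow> 'a::real_normed_vector) \<Rightarrow> bool" where
  "quasi_periodic h \<longleftrightarrow>
     (\<exists>(n::nat) (\<omega>::nat \<Rightarrow> real) (F::(nat \<Rightarrow> real) \<Rightarrow> 'a).
        continuous_on UNIV F \<and>
        (\<forall>x. F x = F (\<lambda>k. if k < n then x k else 0)) \<and>
        (\<forall>x k. k < n \<longrightarrow> F (x(k := x k + 1)) = F x) \<and>
        (\<forall>t. h t = F (\<lambda>k. \<omega> k * t)))"

definition integral0 :: "(real \<Rightarrow> 'a::euclidean_space) \<Rightarrow> real \<Rightarrow> 'a" where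
  "integral0 g t = (if 0 \<le> t then integral {0..t} g else - integral {t..0} g)"

definition mean_value :: "(real \<Rightarrow> 'a::euclidean_space) \<Rightarrow> 'a" where
  "mean_value h = Lim at_top (\<lambda>T. (1 / (2 * T)) *\<^sub>R integral {-T..T} h)"

end

theory Submission
  imports Defs
begin



definition apf :: "nat \<Rightarrow> (nat \<Rightarrow> real) \<Rightarrow> (real \<Rightarrow> 'a::real_normed_vector) \<Rightarrow> bool" where
  "apf n \<omega> h \<longleftrightarrow> (\<forall>\<epsilon>>0. \<exists>\<delta>>0. \<forall>\<tau>. (\<forall>k<n. \<exists>m::int. \<bar>\<omega> k * \<tau> - of_int m\<bar> \<le> \<delta>)
       \<longrightarrow> (\<forall>t. norm (h (t + \<tau>) - h t) \<le> \<epsilon>))"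

lemma floor_eq_close:
  fixes u v M :: real
  assumes "M > 0" "\<lfloor>u * M\<rfloor> = \<lfloor>v * M\<rfloor>"
  shows "\<bar>u - v\<bar> < 1 / M"
proof -
  have "of_int \<lfloor>u * M\<rfloor> \<le> u * M" "u * M < of_int \<lfloor>u * M\<rfloor> + 1"
       "of_int \<lfloor>v * M\<rfloor> \<le> v * M" "v * M < of_int \<lfloor>v * M\<rfloor> + 1" by linarith+
  then have "\<bar>u * M - v * M\<bar> < 1" using assms(2) by linarith
  then have "\<bar>u - v\<bar> * M < 1" using assms(1) by (simp add: left_diff_distrib[symmetric] abs_mult)
  then show ?thesis using assms(1) by (simp add: field_simps)
qed

lemma dioph:
  fixes \<omega> :: "nat \<Rightarrow> real" and n :: nat and \<delta> :: real
  assumes "\<delta> > 0"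
  shows "\<exists>L\<ge>0. \<forall>a. \<exists>\<tau>. a \<le> \<tau> \<and> \<tau> \<le> a + L \<and> (\<forall>k<n. \<exists>m::int. \<bar>\<omega> k * \<tau> - of_int m\<bar> \<le> \<delta>)"
proof -
  define M :: nat where "M = nat \<lceil>1/\<delta>\<rceil> + 1"
  have Mpos: "real M > 0" by (simp add: M_def)
  have "real M \<ge> 1/\<delta>" unfolding M_def by linarith
  then have Mdel: "1 / real M \<le> \<delta>" using assms Mpos by (simp add: field_simps)
  define box where "box t = map (\<lambda>k. nat \<lfloor>frac (\<omega> k * t) * real M\<rfloor>) [0..<n]" for t
  define S where "S = range box"
  have "S \<subseteq> {xs. set xs \<subseteq> {..<M} \<and> length xs = n}"
  proof
    fix b assume "b \<in> S"
    then obtain t where b: "b = box t" by (auto simp: S_def)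
    have "nat \<lfloor>frac u * real M\<rfloor> < M" for u
    proof -
      have "frac u * real M < real M" using frac_lt_1[of u] Mpos by simp
      then have "\<lfloor>frac u * real M\<rfloor> < int M" by (simp add: floor_less_iff)
      then show ?thesis using Mpos by linarith
    qed
    then show "b \<in> {xs. set xs \<subseteq> {..<M} \<and> length xs = n}" by (auto simp: b box_def)
  qed
  then have finS: "finite S" by (rule finite_subset) (rule finite_lists_length_eq, simp)
  define s where "s b = (SOME t. box t = b)" for b
  have sb: "box (s (box t)) = box t" for t unfolding s_def by (rule someI) (rule refl)
  define L0 where "L0 = Max ((\<lambda>b. \<bar>s b\<bar>) ` S)"
  have sL0: "\<bar>s (box t)\<bar> \<le> L0" for t
    unfolding L0_def by (rule Max_ge) (use finS S_def in auto)
  have L0: "L0 \<ge> 0" using sL0[of 0] by linarith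
  show ?thesis
  proof (rule exI[of _ "2 * L0"], intro conjI allI)
    show "0 \<le> 2 * L0" using L0 by simp
    fix a
    define a' where "a' = a + L0"
    define t' where "t' = s (box (- a'))"
    have bt: "box t' = box (-a')" unfolding t'_def by (rule sb)
    have t'b: "\<bar>t'\<bar> \<le> L0" unfolding t'_def by (rule sL0)
    show "\<exists>\<tau>. a \<le> \<tau> \<and> \<tau> \<le> a + 2 * L0 \<and> (\<forall>k<n. \<exists>m::int. \<bar>\<omega> k * \<tau> - of_int m\<bar> \<le> \<delta>)"
    proof (intro exI[of _ "a' + t'"] conjI allI impI)
      show "a \<le> a' + t'" "a' + t' \<le> a + 2 * L0" using t'b by (auto simp: a'_def)
      fix k assume k: "k < n"
      have "nat \<lfloor>frac (\<omega> k * t') * real M\<rfloor> = nat \<lfloor>frac (\<omega> k * (-a')) * real M\<rfloor>"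
        using bt k unfolding box_def by (metis (no_types, lifting) map_eq_conv atLeastLessThan_iff set_upt zero_le)
      moreover have "\<lfloor>frac u * real M\<rfloor> \<ge> 0" for u using frac_ge_0[of u] Mpos by simp
      ultimately have "\<lfloor>frac (\<omega> k * t') * real M\<rfloor> = \<lfloor>frac (\<omega> k * (-a')) * real M\<rfloor>"
        using eq_nat_nat_iff by blast
      then have cl: "\<bar>frac (\<omega> k * t') - frac (\<omega> k * (-a'))\<bar> < 1 / real M"
        by (rule floor_eq_close[OF Mpos])
      have "\<omega> k * (a' + t') - of_int (\<lfloor>\<omega> k * t'\<rfloor> - \<lfloor>\<omega> k * (-a')\<rfloor>)
            = frac (\<omega> k * t') - frac (\<omega> k * (-a'))"
        by (simp add: frac_def algebra_simps)
      then show "\<exists>m::int. \<bar>\<omega> k * (a' + t') - of_int m\<bar> \<le> \<delta>"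
        using cl Mdel by (intro exI[of _ "\<lfloor>\<omega> k * t'\<rfloor> - \<lfloor>\<omega> k * (-a')\<rfloor>"]) simp
    qed
  qed
qed

lemma apf_rd:
  assumes "apf n \<omega> h" "\<epsilon> > 0"
  shows "\<exists>L\<ge>0. \<forall>a. \<exists>\<tau>. a \<le> \<tau> \<and> \<tau> \<le> a + L \<and> (\<forall>t. norm (h (t + \<tau>) - h t) \<le> \<epsilon>)"
proof -
  obtain \<delta> where "\<delta> > 0" and d: "\<forall>\<tau>. (\<forall>k<n. \<exists>m::int. \<bar>\<omega> k * \<tau> - of_int m\<bar> \<le> \<delta>)
       \<longrightarrow> (\<forall>t. norm (h (t + \<tau>) - h t) \<le> \<epsilon>)" using assms unfolding apf_def by blast
  obtain L where "L \<ge> 0" and L: "\<forall>a. \<exists>\<tau>. a \<le> \<tau> \<and> \<tau> \<le> a + L \<and> (\<forall>k<n. \<exists>m::int. \<bar>\<omega> k * \<tau> - of_int m\<bar> \<le> \<delta>)"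
    using dioph[OF \<open>\<delta> > 0\<close>] by blast
  show ?thesis
  proof (rule exI[of _ L], intro conjI allI)
    show "L \<ge> 0" by fact
    fix a
    obtain \<tau> where "a \<le> \<tau>" "\<tau> \<le> a + L" and "\<forall>k<n. \<exists>m::int. \<bar>\<omega> k * \<tau> - of_int m\<bar> \<le> \<delta>"
      using L by blast
    moreover have "\<forall>t. norm (h (t + \<tau>) - h t) \<le> \<epsilon>" using d calculation(3) by blast
    ultimately show "\<exists>\<tau>. a \<le> \<tau> \<and> \<tau> \<le> a + L \<and> (\<forall>t. norm (h (t + \<tau>) - h t) \<le> \<epsilon>)" by blast
  qed
qed

definition comb :: "nat \<Rightarrow> (nat \<Rightarrow> real) \<Rightarrow> (nat \<Rightarrow> real) \<Rightarrow> nat \<Rightarrow> real" where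
  "comb n1 \<omega>1 \<omega>2 = (\<lambda>k. if k < n1 then \<omega>1 k else \<omega>2 (k - n1))"

lemma apf_left:
  assumes "apf n1 \<omega>1 h" shows "apf (n1 + n2) (comb n1 \<omega>1 \<omega>2) h"
  unfolding apf_def
proof (intro allI impI)
  fix \<epsilon> :: real assume "\<epsilon> > 0"
  then obtain \<delta> where "\<delta> > 0" and d: "\<forall>\<tau>. (\<forall>k<n1. \<exists>m::int. \<bar>\<omega>1 k * \<tau> - of_int m\<bar> \<le> \<delta>)
       \<longrightarrow> (\<forall>t. norm (h (t + \<tau>) - h t) \<le> \<epsilon>)" using assms unfolding apf_def by blast
  show "\<exists>\<delta>>0. \<forall>\<tau>. (\<forall>k<n1 + n2. \<exists>m::int. \<bar>comb n1 \<omega>1 \<omega>2 k * \<tau> - of_int m\<bar> \<le> \<delta>) \<longrightarrow>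
             (\<forall>t. norm (h (t + \<tau>) - h t) \<le> \<epsilon>)"
  proof (intro exI[of _ \<delta>] conjI allI impI \<open>\<delta> > 0\<close>)
    fix \<tau> t assume H: "\<forall>k<n1 + n2. \<exists>m::int. \<bar>comb n1 \<omega>1 \<omega>2 k * \<tau> - of_int m\<bar> \<le> \<delta>"
    have "\<forall>k<n1. \<exists>m::int. \<bar>\<omega>1 k * \<tau> - of_int m\<bar> \<le> \<delta>"
    proof (intro allI impI)
      fix k assume "k < n1" then show "\<exists>m::int. \<bar>\<omega>1 k * \<tau> - of_int m\<bar> \<le> \<delta>"
        using H[rule_format, of k] by (simp add: comb_def)
    qed
    then show "norm (h (t + \<tau>) - h t) \<le> \<epsilon>" using d by blast
  qed
qed

lemma apf_right:
  assumes "apf n2 \<omega>2 h" shows "apf (n1 + n2) (comb n1 \<omega>1 \<omega>2) h"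
  unfolding apf_def
proof (intro allI impI)
  fix \<epsilon> :: real assume "\<epsilon> > 0"
  then obtain \<delta> where "\<delta> > 0" and d: "\<forall>\<tau>. (\<forall>k<n2. \<exists>m::int. \<bar>\<omega>2 k * \<tau> - of_int m\<bar> \<le> \<delta>)
       \<longrightarrow> (\<forall>t. norm (h (t + \<tau>) - h t) \<le> \<epsilon>)" using assms unfolding apf_def by blast
  show "\<exists>\<delta>>0. \<forall>\<tau>. (\<forall>k<n1 + n2. \<exists>m::int. \<bar>comb n1 \<omega>1 \<omega>2 k * \<tau> - of_int m\<bar> \<le> \<delta>) \<longrightarrow>
             (\<forall>t. norm (h (t + \<tau>) - h t) \<le> \<epsilon>)"
  proof (intro exI[of _ \<delta>] conjI allI impI \<open>\<delta> > 0\<close>)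
    fix \<tau> t assume H: "\<forall>k<n1 + n2. \<exists>m::int. \<bar>comb n1 \<omega>1 \<omega>2 k * \<tau> - of_int m\<bar> \<le> \<delta>"
    have "\<forall>k<n2. \<exists>m::int. \<bar>\<omega>2 k * \<tau> - of_int m\<bar> \<le> \<delta>"
    proof (intro allI impI)
      fix k assume "k < n2" then show "\<exists>m::int. \<bar>\<omega>2 k * \<tau> - of_int m\<bar> \<le> \<delta>"
        using H[rule_format, of "k + n1"] by (simp add: comb_def)
    qed
    then show "norm (h (t + \<tau>) - h t) \<le> \<epsilon>" using d by blast
  qed
qed

lemma apf_mult:
  fixes h1 h2 :: "real \<Rightarrow> complex"
  assumes a1: "apf n \<omega> h1" and a2: "apf n \<omega> h2"
    and b1: "\<forall>t. norm (h1 t) \<le> B1" and b2: "\<forall>t. norm (h2 t) \<le> B2"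
  shows "apf n \<omega> (\<lambda>t. h1 t * h2 t)"
  unfolding apf_def
proof (intro allI impI)
  fix \<epsilon> :: real assume e: "\<epsilon> > 0"
  have B1: "B1 \<ge> 0" using b1 norm_ge_zero order_trans by blast
  have B2: "B2 \<ge> 0" using b2 norm_ge_zero order_trans by blast
  define \<epsilon>' where "\<epsilon>' = \<epsilon> / (B1 + B2 + 1)"
  have e': "\<epsilon>' > 0" using e B1 B2 by (simp add: \<epsilon>'_def)
  obtain d1 where "d1 > 0" and d1: "\<forall>\<tau>. (\<forall>k<n. \<exists>m::int. \<bar>\<omega> k * \<tau> - of_int m\<bar> \<le> d1)
       \<longrightarrow> (\<forall>t. norm (h1 (t + \<tau>) - h1 t) \<le> \<epsilon>')" using a1 e' unfolding apf_def by blast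
  obtain d2 where "d2 > 0" and d2: "\<forall>\<tau>. (\<forall>k<n. \<exists>m::int. \<bar>\<omega> k * \<tau> - of_int m\<bar> \<le> d2)
       \<longrightarrow> (\<forall>t. norm (h2 (t + \<tau>) - h2 t) \<le> \<epsilon>')" using a2 e' unfolding apf_def by blast
  show "\<exists>\<delta>>0. \<forall>\<tau>. (\<forall>k<n. \<exists>m::int. \<bar>\<omega> k * \<tau> - of_int m\<bar> \<le> \<delta>) \<longrightarrow>
             (\<forall>t. norm (h1 (t + \<tau>) * h2 (t + \<tau>) - h1 t * h2 t) \<le> \<epsilon>)"
  proof (intro exI[of _ "min d1 d2"] conjI allI impI)
    show "min d1 d2 > 0" using \<open>d1 > 0\<close> \<open>d2 > 0\<close> by simp
    fix \<tau> t assume H: "\<forall>k<n. \<exists>m::int. \<bar>\<omega> k * \<tau> - of_int m\<bar> \<le> min d1 d2"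
    have n1: "norm (h1 (t + \<tau>) - h1 t) \<le> \<epsilon>'" using d1 H by force
    have n2: "norm (h2 (t + \<tau>) - h2 t) \<le> \<epsilon>'" using d2 H by force
    have "h1 (t + \<tau>) * h2 (t + \<tau>) - h1 t * h2 t
          = h1 (t + \<tau>) * (h2 (t + \<tau>) - h2 t) + (h1 (t + \<tau>) - h1 t) * h2 t"
      by (simp add: algebra_simps)
    then have "norm (h1 (t + \<tau>) * h2 (t + \<tau>) - h1 t * h2 t)
          \<le> norm (h1 (t + \<tau>)) * norm (h2 (t + \<tau>) - h2 t) + norm (h1 (t + \<tau>) - h1 t) * norm (h2 t)"
      by (metis norm_mult norm_triangle_ineq)
    also have "\<dots> \<le> B1 * \<epsilon>' + \<epsilon>' * B2"
      using b1 b2 n1 n2 B1 B2 e' by (intro add_mono mult_mono) auto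
    also have "\<dots> \<le> \<epsilon>"
    proof -
      have "B1 * \<epsilon>' + \<epsilon>' * B2 = (B1 + B2) * \<epsilon>'" by (simp add: algebra_simps)
      also have "\<dots> \<le> (B1 + B2 + 1) * \<epsilon>'" using e' by simp
      also have "\<dots> = \<epsilon>" using B1 B2 by (simp add: \<epsilon>'_def)
      finally show ?thesis .
    qed
    finally show "norm (h1 (t + \<tau>) * h2 (t + \<tau>) - h1 t * h2 t) \<le> \<epsilon>" .
  qed
qed

lemma apf_cnj:
  fixes h :: "real \<Rightarrow> complex"
  assumes "apf n \<omega> h" shows "apf n \<omega> (\<lambda>t. cnj (h t))"
proof -
  have "norm (cnj (h (t + \<tau>)) - cnj (h t)) = norm (h (t + \<tau>) - h t)" for t \<tau>
    by (metis complex_cnj_diff complex_mod_cnj)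
  then show ?thesis using assms unfolding apf_def by presburger
qed



lemma qp_shift1_nat:
  fixes n :: nat and F :: "(nat \<Rightarrow> real) \<Rightarrow> 'a"
  assumes per: "\<forall>x k. k < n \<longrightarrow> F (x(k := x k + 1)) = F x" and k: "k < n"
  shows "F (x(k := x k + of_nat m)) = F x"
proof (induction m)
  case 0 then show ?case by simp
next
  case (Suc m)
  let ?y = "x(k := x k + of_nat m)"
  have "x(k := x k + of_nat (Suc m)) = ?y(k := ?y k + 1)" by (simp add: algebra_simps)
  have "F (?y(k := ?y k + 1)) = F ?y" using per k by blast
  then show ?case using Suc.IH \<open>x(k := x k + of_nat (Suc m)) = ?y(k := ?y k + 1)\<close> by metis
qed

lemma qp_shift1:
  fixes n :: nat and F :: "(nat \<Rightarrow> real) \<Rightarrow> 'a"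
  assumes per: "\<forall>x k. k < n \<longrightarrow> F (x(k := x k + 1)) = F x" and k: "k < n"
  shows "F (x(k := x k + of_int z)) = F x"
proof (cases "z \<ge> 0")
  case True
  then have "of_int z = (of_nat (nat z) :: real)" by simp
  then show ?thesis using qp_shift1_nat[OF per k] by metis
next
  case False
  let ?y = "x(k := x k + of_int z)"
  have "?y(k := ?y k + of_nat (nat (-z))) = x" using False by auto
  moreover have "F (?y(k := ?y k + of_nat (nat (-z)))) = F ?y" by (rule qp_shift1_nat[OF per k])
  ultimately show ?thesis by metis
qed

lemma qp_shift:
  fixes n :: nat and F :: "(nat \<Rightarrow> real) \<Rightarrow> 'a"
  assumes per: "\<forall>x k. k < n \<longrightarrow> F (x(k := x k + 1)) = F x"
  shows "F (\<lambda>k. x k + (if k < n then of_int (d k) else 0)) = F x"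
proof -
  have "j \<le> n \<Longrightarrow> F (\<lambda>k. x k + (if k < j then of_int (d k) else 0)) = F x" for j
  proof (induction j)
    case 0 then show ?case by simp
  next
    case (Suc j)
    let ?y = "\<lambda>k. x k + (if k < j then of_int (d k) else 0)"
    have "(\<lambda>k. x k + (if k < Suc j then of_int (d k) else 0)) = ?y(j := ?y j + of_int (d j))"
      by (auto simp: fun_eq_iff)
    moreover have "F (?y(j := ?y j + of_int (d j))) = F ?y" using Suc by (intro qp_shift1[OF per]) simp
    ultimately show ?case using Suc by (metis Suc_leD)
  qed
  then show ?thesis by simp
qed

lemma qp_reduce:
  fixes n :: nat and F :: "(nat \<Rightarrow> real) \<Rightarrow> 'a"
  assumes proj: "\<forall>x. F x = F (\<lambda>k. if k < n then x k else 0)"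
    and per: "\<forall>x k. k < n \<longrightarrow> F (x(k := x k + 1)) = F x"
  shows "F x = F (\<lambda>k. if k < n then frac (x k) else 0)"
proof -
  have "(\<lambda>k. if k < n then x k else 0) =
        (\<lambda>k. (if k < n then frac (x k) else 0) + (if k < n then of_int \<lfloor>x k\<rfloor> else 0))"
    by (auto simp: fun_eq_iff frac_def)
  then show ?thesis using proj qp_shift[OF per, of "\<lambda>k. if k < n then frac (x k) else 0" "\<lambda>k. \<lfloor>x k\<rfloor>"]
    by metis
qed

lemma dist_fun_bound:
  fixes x y :: "nat \<Rightarrow> real"
  assumes "\<forall>k. \<bar>x k - y k\<bar> \<le> e"
  shows "dist x y \<le> 2 * e"
proof -
  have e: "e \<ge> 0" using assms by (metis abs_ge_zero order_trans)
  have s1: "summable (\<lambda>m. (1/2::real)^m * e)"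
    by (intro summable_mult2) (simp add: summable_geometric_iff)
  have s2: "summable (\<lambda>m. (1/2::real)^m * min (dist (x (from_nat m)) (y (from_nat m))) 1)"
    by (rule summable_comparison_test'[of "\<lambda>n. (1/2)^n"]) (auto simp add: summable_geometric_iff)
  have "dist x y = (\<Sum>m. (1/2)^m * min (dist (x (from_nat m)) (y (from_nat m))) 1)"
    by (simp add: dist_fun_def)
  also have "\<dots> \<le> (\<Sum>m. (1/2::real)^m * e)"
  proof (rule suminf_le[OF _ s2 s1])
    fix m
    have "min (dist (x (from_nat m)) (y (from_nat m))) 1 \<le> e"
      using assms by (simp add: dist_real_def min_le_iff_disj)
    then show "(1/2::real)^m * min (dist (x (from_nat m)) (y (from_nat m))) 1 \<le> (1/2)^m * e"
      by (intro mult_left_mono) auto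
  qed
  also have "\<dots> = 2 * e"
    using suminf_geometric[of "1/2::real"] by (simp add: suminf_mult2[symmetric] s1)
  finally show ?thesis .
qed

lemma qp_props:
  fixes h :: "real \<Rightarrow> 'a::real_normed_vector"
  assumes "quasi_periodic h"
  shows "continuous_on UNIV h \<and> (\<exists>B. \<forall>t. norm (h t) \<le> B) \<and> (\<exists>n \<omega>. apf n \<omega> h)"
proof -
  obtain n \<omega> F where contF: "continuous_on UNIV (F :: (nat \<Rightarrow> real) \<Rightarrow> 'a)"
    and proj: "\<forall>x. F x = F (\<lambda>k. if k < n then x k else 0)"
    and per: "\<forall>x k. k < n \<longrightarrow> F (x(k := x k + 1)) = F x"
    and hF: "\<forall>t. h t = F (\<lambda>k. \<omega> k * t)"
    using assms unfolding quasi_periodic_def by blast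
  define C2 where "C2 = (PiE UNIV (\<lambda>k. if k < n then {-1..2::real} else {0}))"
  have "compactin (product_topology (\<lambda>i. euclidean) UNIV) C2"
    unfolding C2_def by (subst compactin_PiE) auto
  then have cC2: "compact C2" by (simp add: euclidean_product_topology compactin_euclidean_iff)
  have memC2: "x \<in> C2 \<longleftrightarrow> (\<forall>k. (k < n \<longrightarrow> x k \<in> {-1..2}) \<and> (k \<ge> n \<longrightarrow> x k = 0))" for x
    unfolding C2_def by (simp add: PiE_UNIV_domain Pi_iff) (metis insert_iff not_le singletonD)
  have hcont: "continuous_on UNIV h"
  proof -
    have "continuous_on UNIV (\<lambda>t::real. (\<lambda>k. \<omega> k * t))"
      by (intro continuous_on_coordinatewise_then_product continuous_intros)
    then have "continuous_on UNIV (F \<circ> (\<lambda>t::real. (\<lambda>k. \<omega> k * t)))"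
      by (rule continuous_on_compose) (rule continuous_on_subset[OF contF], simp)
    then show ?thesis using hF by (simp add: o_def)
  qed
  have red: "h t = F (\<lambda>k. if k < n then frac (\<omega> k * t) else 0)" for t
    using hF qp_reduce[OF proj per] by metis
  have redC2: "(\<lambda>k. if k < n then frac (\<omega> k * t) else 0) \<in> C2" for t
  proof -
    have "\<forall>u::real. -1 \<le> frac u \<and> frac u \<le> 2"
    proof
      fix u show "-1 \<le> frac u \<and> frac u \<le> (2::real)" using frac_ge_0[of u] frac_lt_1[of u] by linarith
    qed
    then show ?thesis unfolding memC2 by simp
  qed
  have bnd: "\<exists>B. \<forall>t. norm (h t) \<le> B"
  proof -
    have "compact (F ` C2)" by (rule compact_continuous_image[OF continuous_on_subset[OF contF] cC2]) simp
    then obtain B where "\<forall>y\<in>F ` C2. norm y \<le> B" using compact_imp_bounded bounded_iff by metis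
    then show ?thesis using red redC2 by auto
  qed
  have uc: "uniformly_continuous_on C2 F"
    by (rule compact_uniformly_continuous[OF continuous_on_subset[OF contF] cC2]) simp
  have "apf n \<omega> h"
    unfolding apf_def
  proof (intro allI impI)
    fix \<epsilon> :: real assume "\<epsilon> > 0"
    then obtain d where d: "d > 0" and dd: "\<forall>x\<in>C2. \<forall>x'\<in>C2. dist x' x < d \<longrightarrow> dist (F x') (F x) < \<epsilon>"
      using uc unfolding uniformly_continuous_on_def by metis
    define \<delta> where "\<delta> = min (1/2) (d/3)"
    have \<delta>: "\<delta> > 0" using d by (simp add: \<delta>_def)
    show "\<exists>\<delta>>0. \<forall>\<tau>. (\<forall>k<n. \<exists>m::int. \<bar>\<omega> k * \<tau> - of_int m\<bar> \<le> \<delta>) \<longrightarrow> (\<forall>t. norm (h (t + \<tau>) - h t) \<le> \<epsilon>)"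
    proof (intro exI[of _ \<delta>] conjI allI impI \<delta>)
      fix \<tau> t
      assume "\<forall>k<n. \<exists>m::int. \<bar>\<omega> k * \<tau> - of_int m\<bar> \<le> \<delta>"
      then obtain m :: "nat \<Rightarrow> int" where m: "\<forall>k<n. \<bar>\<omega> k * \<tau> - of_int (m k)\<bar> \<le> \<delta>" by metis
      define x' where "x' = (\<lambda>k. if k < n then frac (\<omega> k * t) else 0)"
      define y where "y = (\<lambda>k. \<omega> k * (t + \<tau>))"
      define y' where "y' = (\<lambda>k. if k < n then y k - of_int \<lfloor>\<omega> k * t\<rfloor> - of_int (m k) else 0)"
      have hx: "h t = F x'" using red x'_def by simp
      have "F y' = F (\<lambda>k. if k < n then y k else 0)"
      proof -
        have eq: "y' = (\<lambda>k. (if k < n then y k else 0) + (if k < n then of_int (- \<lfloor>\<omega> k * t\<rfloor> - m k) else 0))"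
          by (auto simp: y'_def fun_eq_iff)
        show ?thesis unfolding eq by (rule qp_shift[OF per])
      qed
      moreover have "h (t + \<tau>) = F y" using hF y_def by simp
      moreover have "F y = F (\<lambda>k. if k < n then y k else 0)" by (rule proj[rule_format])
      ultimately have hy: "h (t + \<tau>) = F y'" by simp
      have diff: "\<forall>k. \<bar>y' k - x' k\<bar> \<le> \<delta>"
      proof
        fix k show "\<bar>y' k - x' k\<bar> \<le> \<delta>"
        proof (cases "k < n")
          case True
          then have "y' k - x' k = \<omega> k * \<tau> - of_int (m k)"
            by (simp add: y'_def x'_def y_def frac_def algebra_simps)
          then show ?thesis using m True by simp
        qed (use \<delta> in \<open>simp add: y'_def x'_def\<close>)
      qed
      have x'C2: "x' \<in> C2" using redC2 x'_def by simp
      have "y' \<in> C2" unfolding memC2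
      proof (intro allI conjI impI)
        fix k assume k: "k < n"
        have "\<bar>y' k - x' k\<bar> \<le> 1/2" using diff \<delta>_def by (metis min.boundedE order_trans)
        moreover have "x' k \<ge> 0" "x' k < 1" using k by (auto simp: x'_def frac_lt_1)
        ultimately show "y' k \<in> {-1..2}" by (simp, arith)
      qed (simp add: y'_def)
      moreover have "dist y' x' < d"
        using dist_fun_bound[OF diff] \<delta>_def d by linarith
      ultimately have "dist (F y') (F x') < \<epsilon>" using dd x'C2 by blast
      then show "norm (h (t + \<tau>) - h t) \<le> \<epsilon>" using hx hy by (simp add: dist_norm)
    qed
  qed
  then show ?thesis using hcont bnd by blast
qed



lemma lip_deriv:
  fixes H h :: "real \<Rightarrow> complex"
  assumes der: "\<And>t. (H has_vector_derivative h t) (at t)" and bnd: "\<And>t. norm (h t) \<le> B"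
  shows "norm (H x - H y) \<le> B * \<bar>x - y\<bar>"
proof -
  have main: "norm (H b - H a) \<le> B * (b - a)" if ab: "a < b" for a b
  proof -
    have cont: "continuous_on {a..b} H"
      using der by (meson continuous_at_imp_continuous_on has_vector_derivative_continuous)
    have hd: "(H has_derivative (\<lambda>d. d *\<^sub>R h x)) (at x)" if "a < x" "x < b" for x
      using der[of x] by (simp add: has_vector_derivative_def)
    obtain x where "norm (H b - H a) \<le> norm ((b - a) *\<^sub>R h x)"
      using mvt_general[OF ab cont hd] by blast
    also have "\<dots> = (b - a) * norm (h x)" using ab by simp
    also have "\<dots> \<le> (b - a) * B" using bnd ab by (intro mult_left_mono) auto
    finally show ?thesis by (simp add: mult.commute)
  qed
  show ?thesis
  proof (cases x y rule: linorder_cases)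
    case less
    then show ?thesis using main[OF less] by (simp add: norm_minus_commute)
  next
    case equal
    then show ?thesis by simp
  next
    case greater
    then show ?thesis using main[OF greater] by simp
  qed
qed

lemma cauchy_at_top:
  fixes g :: "real \<Rightarrow> complex"
  assumes C: "\<And>\<epsilon>. \<epsilon> > 0 \<Longrightarrow> \<exists>T. \<forall>U V. T \<le> U \<longrightarrow> T \<le> V \<longrightarrow> norm (g U - g V) \<le> \<epsilon>"
  shows "\<exists>c. (g \<longlongrightarrow> c) at_top"
proof -
  define s where "s k = g (real k)" for k
  have Tc: "T \<le> real m" if "m \<ge> nat \<lceil>T\<rceil>" for T m
  proof -
    have "T \<le> real (nat \<lceil>T\<rceil>)" by (simp add: real_nat_ceiling_ge)
    also have "\<dots> \<le> real m" using that by simp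
    finally show ?thesis .
  qed
  have "Cauchy s"
  proof (rule CauchyI)
    fix e :: real assume "e > 0"
    then obtain T where T: "\<forall>U V. T \<le> U \<longrightarrow> T \<le> V \<longrightarrow> norm (g U - g V) \<le> e/2"
      using C[of "e/2"] by auto
    show "\<exists>M. \<forall>m\<ge>M. \<forall>n\<ge>M. norm (s m - s n) < e"
    proof (intro exI[of _ "nat \<lceil>T\<rceil>"] allI impI)
      fix m n :: nat assume "m \<ge> nat \<lceil>T\<rceil>" "n \<ge> nat \<lceil>T\<rceil>"
      then have "T \<le> real m" "T \<le> real n" using Tc by auto
      then have "norm (s m - s n) \<le> e/2" using T unfolding s_def by blast
      then show "norm (s m - s n) < e" using \<open>e > 0\<close> by linarith
    qed
  qed
  then obtain c where c: "s \<longlonglongrightarrow> c" using Cauchy_convergent_iff convergent_def by blast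
  have "(g \<longlongrightarrow> c) at_top"
  proof (rule tendstoI)
    fix e :: real assume "e > 0"
    then obtain T where T: "\<forall>U V. T \<le> U \<longrightarrow> T \<le> V \<longrightarrow> norm (g U - g V) \<le> e/2"
      using C[of "e/2"] by auto
    have "dist (g U) c < e" if "U \<ge> T" for U
    proof -
      have "(\<lambda>k. norm (g U - s k)) \<longlonglongrightarrow> norm (g U - c)" by (intro tendsto_intros c)
      moreover have "\<exists>N. \<forall>k\<ge>N. norm (g U - s k) \<le> e/2"
      proof (intro exI[of _ "nat \<lceil>T\<rceil>"] allI impI)
        fix k :: nat assume "k \<ge> nat \<lceil>T\<rceil>"
        then have "T \<le> real k" using Tc by auto
        then show "norm (g U - s k) \<le> e/2" using T that unfolding s_def by blast
      qed
      ultimately have "norm (g U - c) \<le> e/2" by (rule LIMSEQ_le_const2)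
      then show ?thesis using \<open>e > 0\<close> by (simp add: dist_norm)
    qed
    then show "eventually (\<lambda>U. dist (g U) c < e) at_top"
      by (auto simp: eventually_at_top_linorder)
  qed
  then show ?thesis by blast
qed


lemma mean_core:
  fixes H h :: "real \<Rightarrow> complex"
  assumes der: "\<And>t. (H has_vector_derivative h t) (at t)"
    and bnd: "\<And>t. norm (h t) \<le> B"
    and ap: "\<And>\<epsilon>. \<epsilon> > 0 \<Longrightarrow> \<exists>L\<ge>0. \<forall>a. \<exists>\<tau>. a \<le> \<tau> \<and> \<tau> \<le> a + L \<and> (\<forall>t. norm (h (t + \<tau>) - h t) \<le> \<epsilon>)"
  shows "\<exists>c. ((\<lambda>T. (H T - H 0) / of_real T) \<longlongrightarrow> c) at_top
           \<and> ((\<lambda>T. (H 0 - H (-T)) / of_real T) \<longlongrightarrow> c) at_top"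
proof -
  have B0: "B \<ge> 0" using bnd[of 0] norm_ge_zero order_trans by blast
  note lip = lip_deriv[OF der bnd]
  have shift: "norm ((H (y+\<tau>) - H y) - (H (x+\<tau>) - H x)) \<le> \<epsilon> * \<bar>y - x\<bar>"
    if ap1: "\<forall>t. norm (h (t+\<tau>) - h t) \<le> \<epsilon>" for \<tau> \<epsilon> x y
  proof -
    have d: "((\<lambda>s. H (s+\<tau>) - H s) has_vector_derivative (h (s+\<tau>) - h s)) (at s)" for s
    proof -
      have "((\<lambda>s. s + \<tau>) has_vector_derivative 1) (at s)"
        by (auto intro!: derivative_eq_intros)
      from vector_diff_chain_at[OF this der[of "s+\<tau>"]]
      have "((\<lambda>s. H (s+\<tau>)) has_vector_derivative h (s+\<tau>)) (at s)" by (simp add: o_def)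
      then show ?thesis by (intro derivative_intros der)
    qed
    have "norm ((\<lambda>s. H (s+\<tau>) - H s) y - (\<lambda>s. H (s+\<tau>) - H s) x) \<le> \<epsilon> * \<bar>y - x\<bar>"
      by (rule lip_deriv[OF d]) (use ap1 in auto)
    then show ?thesis by simp
  qed
  have E: "\<exists>L\<ge>0. \<forall>a b T. T \<ge> 0 \<longrightarrow> norm ((H (a+T) - H a) - (H (b+T) - H b)) \<le> \<epsilon>*T + 2*B*L"
    if \<epsilon>pos: "\<epsilon> > 0" for \<epsilon>
  proof -
    obtain L where L0: "L \<ge> 0" and L: "\<forall>a. \<exists>\<tau>. a \<le> \<tau> \<and> \<tau> \<le> a + L \<and> (\<forall>t. norm (h (t + \<tau>) - h t) \<le> \<epsilon>)"
      using ap[OF \<epsilon>pos] by blast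
    have "norm ((H (a+T) - H a) - (H (b+T) - H b)) \<le> \<epsilon>*T + 2*B*L" if T: "T \<ge> 0" for a b T
    proof -
      obtain \<tau> where t1: "b - a \<le> \<tau>" "\<tau> \<le> b - a + L" and t2: "\<forall>t. norm (h (t + \<tau>) - h t) \<le> \<epsilon>"
        using L by blast
      have e1: "norm ((H (a+T+\<tau>) - H (a+T)) - (H (a+\<tau>) - H a)) \<le> \<epsilon> * T"
        using shift[OF t2, of "a+T" a] T by (simp add: add.commute add.left_commute)
      have ab: "\<bar>a+\<tau>-b\<bar> \<le> L" using t1 by simp
      have e2: "norm (H (a+T+\<tau>) - H (b+T)) \<le> B * L"
        using lip[of "a+T+\<tau>" "b+T"] mult_left_mono[OF ab B0] by (simp add: algebra_simps)
      have e3: "norm (H (a+\<tau>) - H b) \<le> B * L"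
        using lip[of "a+\<tau>" "b"] mult_left_mono[OF ab B0] by simp
      have eq: "(H (a+T) - H a) - (H (b+T) - H b)
          = (H (a+T+\<tau>) - H (b+T)) - (H (a+\<tau>) - H b) - ((H (a+T+\<tau>) - H (a+T)) - (H (a+\<tau>) - H a))"
        by (simp add: algebra_simps)
      have "norm ((H (a+T) - H a) - (H (b+T) - H b))
          \<le> norm (H (a+T+\<tau>) - H (b+T)) + norm (H (a+\<tau>) - H b) + norm ((H (a+T+\<tau>) - H (a+T)) - (H (a+\<tau>) - H a))"
        unfolding eq by (meson add_mono norm_triangle_ineq4 order_refl order_trans)
      then show ?thesis using e1 e2 e3 by linarith
    qed
    then show ?thesis using L0 by blast
  qed
  define g where "g T = (H T - H 0) / of_real T" for T
  have step: "\<exists>L\<ge>0. \<forall>T U. 0 < T \<longrightarrow> T \<le> U \<longrightarrow> norm (g U - g T) \<le> 2*B*T/U + \<epsilon> + 2*B*L/T"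
    if \<epsilon>pos: "\<epsilon> > 0" for \<epsilon>
  proof -
    obtain L where L0: "L \<ge> 0" and L: "\<forall>a b T. T \<ge> 0 \<longrightarrow> norm ((H (a+T) - H a) - (H (b+T) - H b)) \<le> \<epsilon>*T + 2*B*L"
      using E[OF \<epsilon>pos] by blast
    have ind: "norm (H (real n * T) - H 0 - of_nat n * (H T - H 0)) \<le> real n * (\<epsilon>*T + 2*B*L)"
      if T: "T \<ge> 0" for n :: nat and T
    proof (induction n)
      case 0 show ?case by simp
    next
      case (Suc n)
      have eq: "H (real (Suc n) * T) - H 0 - of_nat (Suc n) * (H T - H 0)
          = (H (real n * T) - H 0 - of_nat n * (H T - H 0)) + ((H (real n * T + T) - H (real n * T)) - (H (0 + T) - H 0))"
        by (simp add: algebra_simps)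
      have L': "norm ((H (real n * T + T) - H (real n * T)) - (H (0 + T) - H 0)) \<le> \<epsilon>*T + 2*B*L"
        using L T by blast
      have "norm (H (real (Suc n) * T) - H 0 - of_nat (Suc n) * (H T - H 0))
          \<le> real n * (\<epsilon>*T + 2*B*L) + (\<epsilon>*T + 2*B*L)"
        unfolding eq by (rule order_trans[OF norm_triangle_ineq add_mono[OF Suc.IH L']])
      then show ?case by (simp add: algebra_simps)
    qed
    have "norm (g U - g T) \<le> 2*B*T/U + \<epsilon> + 2*B*L/T" if T: "0 < T" "T \<le> U" for T U
    proof -
      define n where "n = nat \<lfloor>U/T\<rfloor>"
      have U0: "U > 0" using T by linarith
      have "U / T \<ge> 1" using T by simp
      then have rn: "real n = of_int \<lfloor>U/T\<rfloor>" unfolding n_def by simp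
      have nU: "real n \<le> U / T" "U / T < real n + 1" unfolding rn by linarith+
      have n_le: "real n * T \<le> U" using nU(1) T by (simp add: field_simps)
      have r_lt: "U < real n * T + T" using nU(2) T by (simp add: field_simps)
      define X where "X = H U - H 0 - of_real (U/T) * (H T - H 0)"
      have Xeq: "X = (H U - H (real n * T)) + (H (real n * T) - H 0 - of_nat n * (H T - H 0))
                   - of_real (U/T - real n) * (H T - H 0)"
        by (simp add: X_def algebra_simps)
      have x1: "norm (H U - H (real n * T)) \<le> B * T"
      proof -
        have "norm (H U - H (real n * T)) \<le> B * \<bar>U - real n * T\<bar>" by (rule lip)
        also have "\<dots> \<le> B * T" using n_le r_lt B0 by (intro mult_left_mono) auto
        finally show ?thesis .
      qed
      have x2: "norm (H (real n * T) - H 0 - of_nat n * (H T - H 0)) \<le> (U/T) * (\<epsilon>*T + 2*B*L)"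
      proof -
        have "norm (H (real n * T) - H 0 - of_nat n * (H T - H 0)) \<le> real n * (\<epsilon>*T + 2*B*L)"
          using ind T by simp
        also have "\<dots> \<le> (U/T) * (\<epsilon>*T + 2*B*L)"
          using nU(1) L0 B0 T \<open>\<epsilon> > 0\<close> by (intro mult_right_mono) auto
        finally show ?thesis .
      qed
      have x3: "norm (of_real (U/T - real n) * (H T - H 0)) \<le> B * T"
      proof -
        have "norm (of_real (U/T - real n) * (H T - H 0)) = \<bar>U/T - real n\<bar> * norm (H T - H 0)"
          by (simp only: norm_mult norm_of_real)
        also have "\<dots> \<le> 1 * (B * T)"
        proof (rule mult_mono)
          show "\<bar>U/T - real n\<bar> \<le> 1" using nU by simp
          show "norm (H T - H 0) \<le> B * T" using lip[of T 0] T by simp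
        qed (use B0 T in auto)
        finally show ?thesis by simp
      qed
      have "norm X \<le> B * T + (U/T) * (\<epsilon>*T + 2*B*L) + B * T"
        unfolding Xeq using x1 x2 x3
        by (meson add_mono norm_triangle_ineq norm_triangle_ineq4 order_trans)
      also have "\<dots> = 2*B*T + U * \<epsilon> + 2*B*L*U/T" using T by (simp add: field_simps)
      finally have nX: "norm X \<le> 2*B*T + U * \<epsilon> + 2*B*L*U/T" .
      have "g U - g T = X / of_real U"
        using T U0 by (simp add: g_def X_def field_simps)
      then have "norm (g U - g T) = norm X / U" using U0 by (simp add: norm_divide)
      also have "\<dots> \<le> (2*B*T + U * \<epsilon> + 2*B*L*U/T) / U"
        using nX U0 by (simp add: divide_right_mono)
      also have "\<dots> = 2*B*T/U + \<epsilon> + 2*B*L/T" using U0 T by (simp add: field_simps)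
      finally show ?thesis .
    qed
    then show ?thesis using L0 by blast
  qed
  have "\<exists>c. (g \<longlongrightarrow> c) at_top"
  proof (rule cauchy_at_top)
    fix e :: real assume e: "e > 0"
    obtain L where L0: "L \<ge> 0"
      and L: "\<forall>T U. 0 < T \<longrightarrow> T \<le> U \<longrightarrow> norm (g U - g T) \<le> 2*B*T/U + e/8 + 2*B*L/T"
      using step[of "e/8"] e by auto
    define T0 where "T0 = max 1 (16*B*L/e)"
    define T1 where "T1 = max T0 (16*B*T0/e)"
    have T0: "T0 > 0" "T0 \<ge> 16*B*L/e" by (auto simp: T0_def)
    have c1: "2*B*L/T0 \<le> e/8"
    proof -
      have "16*B*L \<le> e * T0" using T0(2) e by (simp add: field_simps)
      then show ?thesis using T0(1) e by (simp add: field_simps)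
    qed
    have near: "norm (g U - g T0) \<le> 3*e/8" if U: "U \<ge> T1" for U
    proof -
      have "T0 \<le> U" "16*B*T0/e \<le> U" using U by (auto simp: T1_def)
      then have U0: "U > 0" using T0 by linarith
      have "16*B*T0 \<le> e * U" using \<open>16*B*T0/e \<le> U\<close> e by (simp add: field_simps)
      then have c2: "2*B*T0/U \<le> e/8" using U0 e by (simp add: field_simps)
      have "norm (g U - g T0) \<le> 2*B*T0/U + e/8 + 2*B*L/T0"
        using L T0(1) \<open>T0 \<le> U\<close> by blast
      then show ?thesis using c1 c2 by linarith
    qed
    show "\<exists>T. \<forall>U V. T \<le> U \<longrightarrow> T \<le> V \<longrightarrow> norm (g U - g V) \<le> e"
    proof (intro exI[of _ T1] allI impI)
      fix U V assume "T1 \<le> U" "T1 \<le> V"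
      then have "norm (g U - g T0) \<le> 3*e/8" "norm (g V - g T0) \<le> 3*e/8" using near by auto
      moreover have "norm (g U - g V) \<le> norm (g U - g T0) + norm (g V - g T0)"
        by (metis norm_minus_commute norm_triangle_ineq4 diff_diff_eq2 diff_add_cancel add_diff_eq)
      ultimately show "norm (g U - g V) \<le> e" using e by linarith
    qed
  qed
  then obtain c where gc: "(g \<longlongrightarrow> c) at_top" by blast
  define g' where "g' T = (H 0 - H (-T)) / of_real T" for T
  have gg: "((\<lambda>T. g' T - g T) \<longlongrightarrow> 0) at_top"
  proof (rule tendstoI)
    fix e :: real assume e: "e > 0"
    obtain L where L0: "L \<ge> 0"
      and L: "\<forall>a b T. T \<ge> 0 \<longrightarrow> norm ((H (a+T) - H a) - (H (b+T) - H b)) \<le> (e/2)*T + 2*B*L"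
      using E[of "e/2"] e by auto
    have "dist (g' T - g T) 0 < e" if T: "T \<ge> max 1 (8*B*L/e)" for T
    proof -
      have T0: "T > 0" "8*B*L \<le> e * T" using T e by (auto simp: field_simps)
      have "g' T - g T = ((H (-T+T) - H (-T)) - (H (0+T) - H 0)) / of_real T"
        by (simp add: g'_def g_def diff_divide_distrib add_divide_distrib)
      then have "norm (g' T - g T) = norm ((H (-T+T) - H (-T)) - (H (0+T) - H 0)) / T"
        using T0 by (simp add: norm_divide)
      also have "\<dots> \<le> ((e/2)*T + 2*B*L) / T"
      proof (rule divide_right_mono)
        show "norm ((H (-T+T) - H (-T)) - (H (0+T) - H 0)) \<le> (e/2)*T + 2*B*L"
          using L T0(1) less_imp_le by blast
      qed (use T0 in simp)
      also have "\<dots> = e/2 + 2*B*L/T" using T0 by (simp add: field_simps)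
      also have "\<dots> < e"
      proof -
        have "2*B*L/T \<le> e/4" using T0 by (simp add: field_simps)
        then show ?thesis using e by linarith
      qed
      finally show ?thesis by (simp add: dist_norm)
    qed
    then show "eventually (\<lambda>T. dist (g' T - g T) 0 < e) at_top"
      unfolding eventually_at_top_linorder by (intro exI[of _ "max 1 (8*B*L/e)"]) blast
  qed
  then have "(g' \<longlongrightarrow> c) at_top" using tendsto_add[OF gc gg] by simp
  then show ?thesis using gc unfolding g_def g'_def by blast
qed




lemma integral0_deriv:
  fixes g :: "real \<Rightarrow> complex"
  assumes cont: "continuous_on UNIV g"
  shows "((integral0 g) has_vector_derivative g t) (at t)"
proof -
  define c where "c = min 0 t - 1"
  define b where "b = max 0 t + 1"
  have ct: "c < t" "t < b" by (auto simp: c_def b_def)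
  have int: "g integrable_on {x..y}" for x y
    by (rule integrable_continuous_real) (rule continuous_on_subset[OF cont], simp)
  have "((\<lambda>u. integral {c..u} g) has_vector_derivative g t) (at t within {c..b})"
    by (rule integral_has_vector_derivative) (use cont ct in \<open>auto intro: continuous_on_subset\<close>)
  then have d1: "((\<lambda>u. integral {c..u} g) has_vector_derivative g t) (at t)"
    using at_within_Icc_at[OF ct] by simp
  then have d2: "((\<lambda>u. integral {c..u} g - integral {c..0} g) has_vector_derivative g t) (at t)"
    by (rule derivative_eq_intros) (auto intro: derivative_eq_intros)
  show ?thesis
  proof (rule has_vector_derivative_transform_within_open[OF d2, of "{c<..}"])
    show "open {c<..}" by simp
    show "t \<in> {c<..}" using ct by simp
    fix y assume y: "y \<in> {c<..}"
    show "integral {c..y} g - integral {c..0} g = integral0 g y"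
    proof (cases "0 \<le> y")
      case True
      have "integral {c..0} g + integral {0..y} g = integral {c..y} g"
        using True c_def by (intro Henstock_Kurzweil_Integration.integral_combine int) auto
      then show ?thesis using True unfolding integral0_def by (simp add: algebra_simps)
    next
      case False
      have "integral {c..y} g + integral {y..0} g = integral {c..0} g"
        using False y by (intro Henstock_Kurzweil_Integration.integral_combine int) auto
      then show ?thesis using False unfolding integral0_def by (simp add: algebra_simps)
    qed
  qed
qed

lemma integral0_zero [simp]: "integral0 g 0 = 0"
  by (simp add: integral0_def)

lemma ftc_sym:
  fixes F f :: "real \<Rightarrow> complex"
  assumes der: "\<And>t. (F has_vector_derivative f t) (at t)" and T: "T \<ge> 0"
  shows "(f has_integral (F T - F (-T))) {-T..T}"
  using T by (intro fundamental_theorem_of_calculus) (auto intro: has_vector_derivative_at_within der)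

lemma qp_mean:
  fixes h :: "real \<Rightarrow> complex"
  assumes cont: "continuous_on UNIV h" and bnd: "\<And>t. norm (h t) \<le> B" and apf: "apf n \<omega> h"
  shows "\<exists>c. ((\<lambda>T. integral0 h T / of_real T) \<longlongrightarrow> c) at_top
           \<and> ((\<lambda>T. integral0 h (-T) / of_real T) \<longlongrightarrow> -c) at_top
           \<and> ((\<lambda>T. (1 / (2 * T)) *\<^sub>R integral {-T..T} h) \<longlongrightarrow> c) at_top"
proof -
  define H where "H = integral0 h"
  have der: "\<And>t. (H has_vector_derivative h t) (at t)" unfolding H_def by (rule integral0_deriv[OF cont])
  have ap: "\<exists>L\<ge>0. \<forall>a. \<exists>\<tau>. a \<le> \<tau> \<and> \<tau> \<le> a + L \<and> (\<forall>t. norm (h (t + \<tau>) - h t) \<le> \<epsilon>)"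
    if "\<epsilon> > 0" for \<epsilon> using apf_rd[OF apf that] .
  obtain c where c1: "((\<lambda>T. (H T - H 0) / of_real T) \<longlongrightarrow> c) at_top"
    and c2: "((\<lambda>T. (H 0 - H (-T)) / of_real T) \<longlongrightarrow> c) at_top"
    using mean_core[OF der bnd ap] by blast
  have H0: "H 0 = 0" by (simp add: H_def)
  have l1: "((\<lambda>T. integral0 h T / of_real T) \<longlongrightarrow> c) at_top" using c1 H0 H_def by simp
  have l2: "((\<lambda>T. integral0 h (-T) / of_real T) \<longlongrightarrow> -c) at_top"
    using tendsto_minus[OF c2] H0 H_def by simp
  have l3: "((\<lambda>T. ((H T - H 0) / of_real T + (H 0 - H (-T)) / of_real T) / 2) \<longlongrightarrow> (c + c) / 2) at_top"
    by (intro tendsto_intros c1 c2) auto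
  have ev: "eventually (\<lambda>T. ((H T - H 0) / of_real T + (H 0 - H (-T)) / of_real T) / 2
          = (1 / (2 * T)) *\<^sub>R integral {-T..T} h) at_top"
    unfolding eventually_at_top_linorder
  proof (intro exI[of _ 1] allI impI)
    fix T :: real assume T: "T \<ge> 1"
    have "integral {-T..T} h = H T - H (-T)" using ftc_sym[OF der, of T] T by (simp add: integral_unique)
    then show "((H T - H 0) / of_real T + (H 0 - H (-T)) / of_real T) / 2 = (1 / (2 * T)) *\<^sub>R integral {-T..T} h"
      using T by (simp add: scaleR_conv_of_real field_simps)
  qed
  have "((\<lambda>T. (1 / (2 * T)) *\<^sub>R integral {-T..T} h) \<longlongrightarrow> c) at_top"
    using Lim_transform_eventually[OF l3 ev] by simp
  then show ?thesis using l1 l2 by blast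
qed



lemma Dlim:
  fixes w g :: "real \<Rightarrow> complex"
  assumes w: "\<And>T. norm (w T) \<le> K" and g: "((\<lambda>T. g T / of_real T) \<longlongrightarrow> 0) at_top"
  shows "((\<lambda>T. w T * (w T * cnj (w T) - 2 * g T) / of_real T) \<longlongrightarrow> 0) at_top"
proof (rule Lim_null_comparison)
  have K0: "K \<ge> 0" using w[of 0] norm_ge_zero order_trans by blast
  show "eventually (\<lambda>T. norm (w T * (w T * cnj (w T) - 2 * g T) / of_real T)
           \<le> K^3 / T + 2*K * norm (g T / of_real T)) at_top"
    unfolding eventually_at_top_linorder
  proof (intro exI[of _ 1] allI impI)
    fix T :: real assume T: "T \<ge> 1"
    have eq: "w T * (w T * cnj (w T) - 2 * g T) / of_real T
        = w T * (w T * cnj (w T)) / of_real T - 2 * w T * (g T / of_real T)"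
      by (simp add: algebra_simps diff_divide_distrib)
    have n1: "norm (w T * (w T * cnj (w T)) / of_real T) = norm (w T) ^ 3 / T"
      using T by (simp add: norm_mult norm_divide power3_eq_cube)
    have "norm (w T) ^ 3 \<le> K ^ 3" using w[of T] by (intro power_mono) auto
    then have n1': "norm (w T * (w T * cnj (w T)) / of_real T) \<le> K^3 / T"
      unfolding n1 using T by (intro divide_right_mono) auto
    have "norm (2 * w T * (g T / of_real T)) = 2 * norm (w T) * norm (g T / of_real T)"
      by (simp only: norm_mult norm_numeral)
    then have n2: "norm (2 * w T * (g T / of_real T)) \<le> 2 * K * norm (g T / of_real T)"
      using w[of T] by (simp add: mult_right_mono)
    show "norm (w T * (w T * cnj (w T) - 2 * g T) / of_real T) \<le> K^3 / T + 2*K * norm (g T / of_real T)"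
      unfolding eq using n1' n2 norm_triangle_ineq4 order_trans add_mono by (smt (verit))
  qed
  have a: "((\<lambda>T. K^3 / T) \<longlongrightarrow> 0) at_top"
    by (rule tendsto_divide_0[OF tendsto_const]) (rule filterlim_at_top_imp_at_infinity[OF filterlim_ident])
  have b: "((\<lambda>T. norm (g T / of_real T)) \<longlongrightarrow> 0) at_top" using tendsto_norm[OF g] by simp
  have "((\<lambda>T. K^3 / T + 2*K * norm (g T / of_real T)) \<longlongrightarrow> 0 + 2*K*0) at_top"
    by (intro tendsto_intros a b)
  then show "((\<lambda>T. K^3 / T + 2*K * norm (g T / of_real T)) \<longlongrightarrow> 0) at_top" by simp
qed

theorem proposition4p1:
  fixes f :: "real \<Rightarrow> real" and Q0 Q1 :: "real \<Rightarrow> complex"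
  assumes f_qp: "quasi_periodic f"
    and Q0_def: "Q0 = (\<lambda>t. exp (2 * \<i> * complex_of_real (integral0 f t)))"
    and Q1_def: "Q1 = (\<lambda>t. Q0 t * integral0
                        (\<lambda>\<tau>. inverse (Q0 \<tau>) - mean_value (\<lambda>s. inverse (Q0 s))) t)"
    and Q0_qp: "quasi_periodic Q0"
    and Q1_qp: "quasi_periodic Q1"
    and M0: "mean_value Q0 = 0"
    and M1: "mean_value Q1 = 0"
  shows "mean_value (\<lambda>t. Q1 t * integral0 (\<lambda>\<tau>. cnj (Q0 \<tau>)) t)
           = 2 * cnj (mean_value (\<lambda>t. Q0 t * integral0 Q1 t))"
proof -
  have nQ0: "norm (Q0 t) = 1" for t by (simp add: Q0_def)
  have invQ0: "inverse (Q0 t) = cnj (Q0 t)" for t by (simp add: Q0_def exp_minus[symmetric] exp_cnj)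
  have cQ0: "cnj (Q0 t) * Q0 t = 1" for t
    using complex_norm_square[of "Q0 t"] nQ0[of t] by (simp add: mult.commute)
  obtain n0 \<omega>0 where cont0: "continuous_on UNIV Q0" and apf0: "apf n0 \<omega>0 Q0"
    using qp_props[OF Q0_qp] by blast
  have bnd0: "norm (Q0 t) \<le> 1" for t using nQ0 by simp
  obtain n1 \<omega>1 B1 where cont1: "continuous_on UNIV Q1" and apf1: "apf n1 \<omega>1 Q1"
    and bnd1: "\<And>t. norm (Q1 t) \<le> B1"
    using qp_props[OF Q1_qp] by blast
  have Bne: "at_top \<noteq> (bot :: real filter)" by simp
  obtain c0 where avg0: "((\<lambda>T. (1 / (2 * T)) *\<^sub>R integral {-T..T} Q0) \<longlongrightarrow> c0) at_top"
    using qp_mean[OF cont0 bnd0 apf0] by blast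
  have "c0 = 0" using M0 tendsto_Lim[OF Bne avg0] unfolding mean_value_def by simp
  have "((\<lambda>T. (1 / (2 * T)) *\<^sub>R integral {-T..T} (\<lambda>s. inverse (Q0 s))) \<longlongrightarrow> cnj c0) at_top"
  proof -
    have "(\<lambda>T. (1 / (2 * T)) *\<^sub>R integral {-T..T} (\<lambda>s. inverse (Q0 s)))
        = (\<lambda>T. cnj ((1 / (2 * T)) *\<^sub>R integral {-T..T} Q0))"
      by (simp add: invQ0 integral_cnj complex_cnj_scaleR)
    then show ?thesis using tendsto_cnj[OF avg0] by simp
  qed
  then have m0: "mean_value (\<lambda>s. inverse (Q0 s)) = 0"
    unfolding mean_value_def using tendsto_Lim[OF Bne] \<open>c0 = 0\<close> by simp
  define P where "P = integral0 (\<lambda>\<tau>. cnj (Q0 \<tau>))"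
  have Q1eq: "Q1 t = Q0 t * P t" for t
  proof -
    have "(\<lambda>\<tau>. inverse (Q0 \<tau>) - mean_value (\<lambda>s. inverse (Q0 s))) = (\<lambda>\<tau>. cnj (Q0 \<tau>))"
      using m0 invQ0 by simp
    then show ?thesis unfolding Q1_def P_def by simp
  qed
  have contc0: "continuous_on UNIV (\<lambda>\<tau>. cnj (Q0 \<tau>))" by (intro continuous_intros cont0)
  have derP: "(P has_vector_derivative cnj (Q0 t)) (at t)" for t
    unfolding P_def by (rule integral0_deriv[OF contc0])
  have Peq: "P t = cnj (Q0 t) * Q1 t" for t
    using cQ0[of t] by (simp add: Q1eq mult.assoc[symmetric])
  have Pbnd: "norm (P t) \<le> B1" for t
    using bnd1[of t] by (simp add: Q1eq norm_mult nQ0)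
  define W where "W t = cnj (P t)" for t
  have derW: "(W has_vector_derivative Q0 t) (at t)" for t
    unfolding W_def using has_vector_derivative_cnj[OF derP[of t]] by simp
  have Wbnd: "norm (W t) \<le> B1" for t using Pbnd by (simp add: W_def)
  have contP: "continuous_on UNIV P"
    using derP by (meson continuous_at_imp_continuous_on has_vector_derivative_continuous)
  define G where "G = integral0 Q1"
  have derG: "(G has_vector_derivative Q1 t) (at t)" for t
    unfolding G_def by (rule integral0_deriv[OF cont1])
  have contG: "continuous_on UNIV G"
    using derG by (meson continuous_at_imp_continuous_on has_vector_derivative_continuous)
  obtain c1 where G1: "((\<lambda>T. G T / of_real T) \<longlongrightarrow> c1) at_top"
    and G2: "((\<lambda>T. G (-T) / of_real T) \<longlongrightarrow> -c1) at_top"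
    and avg1: "((\<lambda>T. (1 / (2 * T)) *\<^sub>R integral {-T..T} Q1) \<longlongrightarrow> c1) at_top"
    using qp_mean[OF cont1 bnd1 apf1] unfolding G_def by blast
  have "c1 = 0" using M1 tendsto_Lim[OF Bne avg1] unfolding mean_value_def by simp
  define A where "A t = Q1 t * P t" for t
  have Aeq: "A = (\<lambda>t. Q1 t * (cnj (Q0 t) * Q1 t))" using Peq by (simp add: A_def fun_eq_iff)
  have a1: "apf (n0 + n1) (comb n0 \<omega>0 \<omega>1) Q1" by (rule apf_right[OF apf1])
  have a0: "apf (n0 + n1) (comb n0 \<omega>0 \<omega>1) (\<lambda>t. cnj (Q0 t))" by (rule apf_left[OF apf_cnj[OF apf0]])
  have a01: "apf (n0 + n1) (comb n0 \<omega>0 \<omega>1) (\<lambda>t. cnj (Q0 t) * Q1 t)"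
    by (rule apf_mult[OF a0 a1, of 1 B1]) (use bnd1 nQ0 in auto)
  have apfA: "apf (n0 + n1) (comb n0 \<omega>0 \<omega>1) A"
    unfolding Aeq by (rule apf_mult[OF a1 a01, of B1 B1]) (use bnd1 Pbnd Peq in auto)
  have contA: "continuous_on UNIV A" unfolding A_def by (intro continuous_intros cont1 contP)
  have bndA: "norm (A t) \<le> B1 * B1" for t
    unfolding A_def norm_mult using bnd1 Pbnd by (intro mult_mono) (auto intro: order_trans[OF norm_ge_zero])
  obtain cA where avgA: "((\<lambda>T. (1 / (2 * T)) *\<^sub>R integral {-T..T} A) \<longlongrightarrow> cA) at_top"
    using qp_mean[OF contA bndA apfA] by blast
  have MA: "mean_value A = cA" unfolding mean_value_def by (rule tendsto_Lim[OF Bne avgA])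
  define B where "B t = Q0 t * G t" for t
  define D where "D t = W t * (W t * cnj (W t) - 2 * G t)" for t
  have derD: "(D has_vector_derivative (cnj (A t) - 2 * B t)) (at t)" for t
  proof -
    have dcW: "((\<lambda>t. cnj (W t)) has_vector_derivative cnj (Q0 t)) (at t)"
      by (rule has_vector_derivative_cnj[OF derW])
    have d2: "((\<lambda>t. 2 :: complex) has_vector_derivative 0) (at t)" by (rule has_vector_derivative_const)
    have "(D has_vector_derivative
        (W t * ((W t * cnj (Q0 t) + Q0 t * cnj (W t)) - (2 * Q1 t + 0 * G t)) + Q0 t * (W t * cnj (W t) - 2 * G t))) (at t)"
      unfolding D_def
      by (intro has_vector_derivative_mult has_vector_derivative_diff derW dcW derG d2)
    moreover have "W t * ((W t * cnj (Q0 t) + Q0 t * cnj (W t)) - (2 * Q1 t + 0 * G t)) + Q0 t * (W t * cnj (W t) - 2 * G t)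
        = cnj (A t) - 2 * B t"
      by (simp add: A_def B_def W_def Q1eq algebra_simps)
    ultimately show ?thesis by simp
  qed
  have contB: "continuous_on UNIV B" unfolding B_def by (intro continuous_intros cont0 contG)
  have ev: "eventually (\<lambda>T. (cnj ((1 / (2 * T)) *\<^sub>R integral {-T..T} A)
            - (D T / of_real T - D (-T) / of_real T) / 2) / 2
          = (1 / (2 * T)) *\<^sub>R integral {-T..T} B) at_top"
    unfolding eventually_at_top_linorder
  proof (intro exI[of _ 1] allI impI)
    fix T :: real assume T: "T \<ge> 1"
    have intA: "A integrable_on {-T..T}"
      by (rule integrable_continuous_real) (rule continuous_on_subset[OF contA], simp)
    have intB: "B integrable_on {-T..T}"
      by (rule integrable_continuous_real) (rule continuous_on_subset[OF contB], simp)
    have intcA: "(\<lambda>t. cnj (A t)) integrable_on {-T..T}" using intA integrable_on_cnj_iff by blast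
    have "((\<lambda>t. cnj (A t) - 2 * B t) has_integral (D T - D (-T))) {-T..T}"
      using ftc_sym[OF derD, of T] T by simp
    then have "D T - D (-T) = integral {-T..T} (\<lambda>t. cnj (A t) - 2 * B t)" by (simp add: integral_unique)
    also have "\<dots> = cnj (integral {-T..T} A) - 2 * integral {-T..T} B"
      using intcA intB by (simp add: integral_diff integral_mult_right integral_cnj integrable_on_mult_right)
    finally have iB: "integral {-T..T} B = (cnj (integral {-T..T} A) - (D T - D (-T))) / 2" by simp
    show "(cnj ((1 / (2 * T)) *\<^sub>R integral {-T..T} A) - (D T / of_real T - D (-T) / of_real T) / 2) / 2
          = (1 / (2 * T)) *\<^sub>R integral {-T..T} B"
      unfolding iB using T by (simp add: scaleR_conv_of_real field_simps)
  qed
  have D1: "((\<lambda>T. D T / of_real T) \<longlongrightarrow> 0) at_top"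
    unfolding D_def by (rule Dlim[OF Wbnd]) (use G1 \<open>c1 = 0\<close> in simp)
  have D2: "((\<lambda>T. D (-T) / of_real T) \<longlongrightarrow> 0) at_top"
    unfolding D_def by (rule Dlim[OF Wbnd]) (use G2 \<open>c1 = 0\<close> in simp)
  have "((\<lambda>T. (cnj ((1 / (2 * T)) *\<^sub>R integral {-T..T} A)
            - (D T / of_real T - D (-T) / of_real T) / 2) / 2) \<longlongrightarrow> (cnj cA - (0 - 0) / 2) / 2) at_top"
    by (intro tendsto_intros avgA D1 D2) auto
  then have avgB: "((\<lambda>T. (1 / (2 * T)) *\<^sub>R integral {-T..T} B) \<longlongrightarrow> cnj cA / 2) at_top"
    using Lim_transform_eventually[OF _ ev] by simp
  have MB: "mean_value B = cnj cA / 2" unfolding mean_value_def by (rule tendsto_Lim[OF Bne avgB])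
  have lhs: "(\<lambda>t. Q1 t * integral0 (\<lambda>\<tau>. cnj (Q0 \<tau>)) t) = A" by (simp add: A_def P_def fun_eq_iff)
  have rhs: "(\<lambda>t. Q0 t * integral0 Q1 t) = B" by (simp add: B_def G_def fun_eq_iff)
  show ?thesis unfolding lhs rhs MA MB by simp
qed


end
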